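(* Let $q>0$ and $c=\sqrt q$. The solution of the Volterra lattice $u'_j=u_j(u_{j+1}-u_{j-1})$, $j\in\mathbb Z$, with initial data at $t=0$ given by $u_j=0$ for $j\le0$, $u_1=u_3=u_5=\dots=1$, $u_2=u_4=\dots=q$, has first component $u_1=f'_1/f_1$ with $$f_1=1+\int_0^t{}_1F_1\bigl(\tfrac32,3,4cx\bigr)e^{(c-1)^2x}\,dx.$$
   Context: $f'=df/dt$. ${}_1F_1(a,b,z)=\sum_{n\ge0}\frac{(a)_n}{(b)_n}\frac{z^n}{n!}$ with $(a)_n=a(a+1)\cdots(a+n-1)$, $(a)_0=1$. *)

theory Defs
  imports "HOL-Analysis.Analysis"
begin

definition hyp1F1 :: "real \<Rightarrow> real \<Rightarrow> real \<Rightarrow> real" where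
  "hyp1F1 a b z = (\<Sum>n. pochhammer a n / pochhammer b n * z ^ n / fact n)"

end

theory Submission
  imports Defs "HOL-Computational_Algebra.Formal_Power_Series"
begin

fun P :: "(nat \<Rightarrow> real) \<Rightarrow> nat \<Rightarrow> nat \<Rightarrow> real" where
  "P w 0 h = (if h = 0 then 1 else 0)"
| "P w (Suc n) h = (if h = 0 then 0 else P w n (h - 1)) + w (h + 1) * P w n (h + 1)"

lemma P_cong: "(\<And>h. h \<ge> 1 \<Longrightarrow> w h = w' h) \<Longrightarrow> P w n h = P w' n h"
  by (induction n arbitrary: h) auto

lemma P_nonneg: "(\<And>h. w h \<ge> 0) \<Longrightarrow> P w n h \<ge> 0"
  by (induction n arbitrary: h) auto

lemma P_bound:
  assumes "\<And>h. \<bar>w h\<bar> \<le> K" "K \<ge> 1"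
  shows "\<bar>P w n h\<bar> \<le> (2*K)^n"
proof (induction n arbitrary: h)
  case 0 then show ?case using assms by auto
next
  case (Suc n)
  have "0 \<le> (2*K)^n" using assms by simp
  then have a: "\<bar>(if h = 0 then 0 else P w n (h - 1))\<bar> \<le> (2*K)^n" using Suc by auto
  have b: "\<bar>w (h + 1) * P w n (h + 1)\<bar> \<le> K * (2*K)^n"
    unfolding abs_mult using assms Suc by (intro mult_mono) auto
  have "\<bar>P w (Suc n) h\<bar> \<le> \<bar>(if h = 0 then 0 else P w n (h - 1))\<bar> + \<bar>w (h + 1) * P w n (h + 1)\<bar>"
    unfolding P.simps by (rule abs_triangle_ineq)
  also have "\<dots> \<le> (2*K)^n + K * (2*K)^n" using a b by linarith
  also have "\<dots> \<le> (2*K)^Suc n" using assms by (simp add: algebra_simps)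
  finally show ?case .
qed

lemma P_two: "P w (Suc (Suc n)) 0 = w 1 * (P w n 0 + w 2 * P w n 2)"
  by (simp add: numeral_2_eq_2)

lemma P_deriv:
  fixes u :: "int \<Rightarrow> real \<Rightarrow> real"
  assumes lattice: "\<And>j t. t \<ge> 0 \<Longrightarrow>
        (u j has_real_derivative (u j t * (u (j + 1) t - u (j - 1) t))) (at t within {0..})"
    and u0: "\<And>t. t \<ge> 0 \<Longrightarrow> u 0 t = 0"
    and t: "t \<ge> 0"
  shows "((\<lambda>t. P (\<lambda>h. u (int h) t) n h) has_real_derivative
           (u (int h + 1) t * u (int h + 2) t * P (\<lambda>h. u (int h) t) n (h + 2))) (at t within {0..})"
proof (induction n arbitrary: h)
  case 0
  then show ?case by simp
next
  case (Suc n)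
  let ?W = "\<lambda>t h. u (int h) t"
  have d1: "((\<lambda>t. if h = 0 then 0 else P (?W t) n (h - 1)) has_real_derivative
     (if h = 0 then 0 else u (int h) t * u (int h + 1) t * P (?W t) n (h + 1))) (at t within {0..})"
  proof (cases "h = 0")
    case True then show ?thesis by simp
  next
    case False
    then have "h - 1 + 2 = h + 1" "int (h - 1) + 1 = int h" "int (h-1) + 2 = int h + 1" by auto
    with Suc[of "h - 1"] False show ?thesis by (simp add: add.commute)
  qed
  have d2: "((\<lambda>t. u (int (h+1)) t) has_real_derivative
      (u (int h + 1) t * (u (int h + 2) t - u (int h) t))) (at t within {0..})"
    using lattice[OF t, of "int h + 1"] by (simp add: ac_simps)
  note d3 = Suc[of "h + 1"]
  have "((\<lambda>t. P (?W t) (Suc n) h) has_real_derivative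
     (if h = 0 then 0 else u (int h) t * u (int h + 1) t * P (?W t) n (h + 1)) +
     ((u (int h + 1) t * (u (int h + 2) t - u (int h) t)) * P (?W t) n (h+1) +
       (u (int (h + 1) + 1) t * u (int (h + 1) + 2) t * P (?W t) n (h + 1 + 2)) * u (int (h+1)) t))
     (at t within {0..})"
    unfolding P.simps by (intro DERIV_add DERIV_mult d1 d2 d3)
  moreover have "(if h = 0 then 0 else u (int h) t * u (int h + 1) t * P (?W t) n (h + 1)) +
     ((u (int h + 1) t * (u (int h + 2) t - u (int h) t)) * P (?W t) n (h+1) +
       (u (int (h + 1) + 1) t * u (int (h + 1) + 2) t * P (?W t) n (h + 1 + 2)) * u (int (h+1)) t)
     = u (int h + 1) t * u (int h + 2) t * P (?W t) (Suc n) (h + 2)"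
    using u0[OF t] by (auto simp: algebra_simps add.assoc)
  ultimately show ?case by simp
qed

lemma P_parity: "odd (n + h) \<Longrightarrow> P w n h = 0"
proof (induction n arbitrary: h)
  case 0 then show ?case by (cases h) auto
next
  case (Suc n)
  show ?case
  proof (cases h)
    case 0 then show ?thesis using Suc by simp
  next
    case (Suc h') then show ?thesis using Suc.prems Suc.IH[of h'] Suc.IH[of "h+1"] by simp
  qed
qed

lemma P_conv: "P w (Suc n) (Suc h) = (\<Sum>m\<le>n. P w m 0 * P (\<lambda>i. w (Suc i)) (n - m) h)"
proof (induction n arbitrary: h)
  case 0 then show ?case by simp
next
  case (Suc n)
  let ?S = "\<lambda>i. w (Suc i)"
  have L: "P w (Suc (Suc n)) (Suc h) = P w (Suc n) h + w (h + 2) * P w (Suc n) (h + 2)"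
    by simp
  show ?case
  proof (cases h)
    case 0
    have "(\<Sum>m\<le>Suc n. P w m 0 * P ?S (Suc n - m) h) =
          (\<Sum>m\<le>n. P w m 0 * P ?S (Suc n - m) h) + P w (Suc n) 0" using 0 by simp
    also have "(\<Sum>m\<le>n. P w m 0 * P ?S (Suc n - m) h) = (\<Sum>m\<le>n. w 2 * (P w m 0 * P ?S (n - m) 1))"
      by (intro sum.cong refl) (use 0 in \<open>auto simp: Suc_diff_le numeral_2_eq_2\<close>)
    also have "\<dots> = w 2 * P w (Suc n) 2"
      using Suc.IH[of 1] by (simp add: sum_distrib_left eval_nat_numeral)
    finally show ?thesis using L 0 by (simp add: eval_nat_numeral)
  next
    case (Suc h')
    have "(\<Sum>m\<le>Suc n. P w m 0 * P ?S (Suc n - m) h) =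
          (\<Sum>m\<le>n. P w m 0 * P ?S (Suc n - m) h)" using Suc by simp
    also have "\<dots> = (\<Sum>m\<le>n. P w m 0 * P ?S (n - m) h') + w (h + 2) * (\<Sum>m\<le>n. P w m 0 * P ?S (n - m) (h + 1))"
      by (simp add: sum_distrib_left sum.distrib[symmetric] Suc_diff_le Suc algebra_simps)
    also have "\<dots> = P w (Suc n) h + w (h + 2) * P w (Suc n) (h + 2)"
      using Suc.IH[of h'] Suc.IH[of "h+1"] Suc by simp
    finally show ?thesis using L by simp
  qed
qed

definition w0 :: "real \<Rightarrow> nat \<Rightarrow> real" where "w0 q h = (if odd h then 1 else q)"

definition aa :: "real \<Rightarrow> nat \<Rightarrow> real" where "aa q k = P (w0 q) (2*k) 0"
definition bb :: "real \<Rightarrow> nat \<Rightarrow> real" where "bb q k = P (\<lambda>i. w0 q (Suc i)) (2*k) 0"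

lemma w0_shift2: "(\<lambda>i. w0 q (Suc (Suc i))) = w0 q"
  by (auto simp: w0_def)

lemma P_conv_even:
  "P w (2 * Suc k) 0 = w 1 * (\<Sum>i\<le>k. P w (2*i) 0 * P (\<lambda>i. w (Suc i)) (2*(k-i)) 0)"
proof -
  let ?S = "\<lambda>i. w (Suc i)"
  let ?F = "\<lambda>m. P w m 0 * P ?S (2*k - m) 0"
  have "P w (2 * Suc k) 0 = w 1 * P w (Suc (2*k)) 1" by simp
  also have "P w (Suc (2*k)) 1 = (\<Sum>m\<le>2*k. ?F m)" using P_conv[of w "2*k" 0] by simp
  also have "\<dots> = (\<Sum>m<2*(Suc k). ?F m)"
  proof -
    have "{..<2*Suc k} = insert (Suc (2*k)) {..2*k}" by auto
    then show ?thesis using P_parity[of "Suc (2*k)" 0 w] by simp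
  qed
  also have "\<dots> = (\<Sum>m<2*(Suc k). if even m then ?F m else 0)"
    by (intro sum.cong refl) (auto simp: P_parity)
  also have "\<dots> = (\<Sum>i<Suc k. ?F (2*i))"
    using sum_split_even_odd[of ?F "\<lambda>_. 0" "Suc k"] by simp
  also have "\<dots> = (\<Sum>i\<le>k. P w (2*i) 0 * P ?S (2*(k-i)) 0)"
    by (intro sum.cong) (auto simp: right_diff_distrib')
  finally show ?thesis by simp
qed

lemma aa_rec: "aa q (Suc k) = (\<Sum>i\<le>k. aa q i * bb q (k - i))"
  unfolding aa_def bb_def using P_conv_even[of "w0 q" k] by (simp add: w0_def)

lemma bb_rec: "bb q (Suc k) = q * (\<Sum>i\<le>k. bb q i * aa q (k - i))"
  unfolding aa_def bb_def using P_conv_even[of "\<lambda>i. w0 q (Suc i)" k]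
  by (simp add: w0_shift2) (simp add: w0_def)

lemma aa0: "aa q 0 = 1" and bb0: "bb q 0 = 1" by (simp_all add: aa_def bb_def)

lemma A_eq: "Abs_fps (aa q) = 1 + fps_X * (Abs_fps (aa q) * Abs_fps (bb q))"
proof (rule fps_ext)
  fix n show "fps_nth (Abs_fps (aa q)) n = fps_nth (1 + fps_X * (Abs_fps (aa q) * Abs_fps (bb q))) n"
  proof -
    have "fps_nth (Abs_fps (aa q) * Abs_fps (bb q)) k = aa q (Suc k)" for k
      by (simp add: fps_mult_nth atLeast0AtMost aa_rec)
    then show ?thesis by (cases n) (simp_all add: aa0)
  qed
qed

lemma B_eq: "Abs_fps (bb q) = 1 + fps_const q * (fps_X * (Abs_fps (bb q) * Abs_fps (aa q)))"
proof (rule fps_ext)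
  fix n show "fps_nth (Abs_fps (bb q)) n = fps_nth (1 + fps_const q * (fps_X * (Abs_fps (bb q) * Abs_fps (aa q)))) n"
  proof -
    have "fps_nth (Abs_fps (bb q) * Abs_fps (aa q)) k * q = bb q (Suc k)" for k
      by (simp add: fps_mult_nth atLeast0AtMost bb_rec)
    then show ?thesis by (cases n) (simp_all add: bb0 mult.commute)
  qed
qed

lemma A_quad:
  fixes q :: real
  defines "A \<equiv> Abs_fps (aa q)"
  shows "1 - A + (1 - fps_const q) * fps_X * A + fps_const q * fps_X * A^2 = 0"
proof -
  define B where "B = Abs_fps (bb q)"
  have 1: "A = 1 + fps_X * (A * B)" using A_eq unfolding A_def B_def .
  have 2: "B = 1 + fps_const q * (fps_X * (B * A))" using B_eq unfolding A_def B_def .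
  show ?thesis using 1 2 by algebra
qed

lemma A_ode:
  fixes q :: real
  defines "A \<equiv> Abs_fps (aa q)"
  defines "Q \<equiv> fps_const q"
  shows "2 * (1 - 2*(1+Q)*fps_X + (1-Q)^2*fps_X^2) * (-(1-Q) - 2*Q*(A + fps_X * fps_deriv A))
     - (-2*(1+Q) + 2*(1-Q)^2*fps_X) * (1 - (1-Q)*fps_X - 2*Q*fps_X*A) = 0"
proof -
  define D where "D = fps_deriv A"
  have Z: "1 - A + (1 - Q) * fps_X * A + Q * fps_X * A^2 = 0" using A_quad unfolding A_def Q_def .
  have "fps_deriv (1 - A + (1 - Q) * fps_X * A + Q * fps_X * A^2) = 0" by (simp add: Z)
  then have Z': "- D + (1 - Q) * (A + fps_X * D) + Q * (A^2 + 2 * fps_X * A * D) = 0"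
    unfolding D_def Q_def by (simp add: fps_deriv_power algebra_simps power2_eq_square)
  show ?thesis unfolding D_def[symmetric] using Z Z' by algebra
qed

lemma aa_lin:
  fixes q :: real
  assumes q: "q \<noteq> 0"
  shows "(n+4) * aa q (n+3) = (1+q)*(2*n+5) * aa q (n+2) - (1-q)^2*(n+1)*aa q (n+1)"
proof -
  have "fps_nth (2 * (1 - 2*(1+fps_const q)*fps_X + (1-fps_const q)^2*fps_X^2) * (-(1-fps_const q) - 2*fps_const q*(Abs_fps (aa q) + fps_X * fps_deriv (Abs_fps (aa q))))
     - (-2*(1+fps_const q) + 2*(1-fps_const q)^2*fps_X) * (1 - (1-fps_const q)*fps_X - 2*fps_const q*fps_X*Abs_fps (aa q))) (n+3) = 0"
    by (subst A_ode) simp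
  then have "4*q*((n+4) * aa q (n+3) - ((1+q)*(2*n+5) * aa q (n+2) - (1-q)^2*(n+1)*aa q (n+1))) = 0"
    by (simp add: numeral_fps_const power2_eq_square ring_distribs mult.assoc eval_nat_numeral del: fps_const_mult)
  then show ?thesis using q by simp
qed

lemma aa1: "aa q 1 = 1" by (simp add: aa_def w0_def eval_nat_numeral)
lemma aa2: "aa q 2 = 1 + q" by (simp add: aa_def w0_def eval_nat_numeral)

definition wc :: "real \<Rightarrow> nat \<Rightarrow> real" where
  "wc c n = pochhammer (3/2::real) n / pochhammer (3::real) n / fact n * (4*c)^n"

lemma wc_aux:
  fixes A B F p r x c :: real
  assumes "B \<noteq> 0" "F \<noteq> 0" "p \<noteq> 0" "r \<noteq> 0"
  shows "(A*(r-3/2))/(B*r)/(p*F)*(x*(4*c)) * (p*r) = A/B/F*x*(2*c*(2*r-3))"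
  using assms by (simp add: field_simps)

lemma wc_Suc: "wc c (Suc n) * ((n+1)*(n+3)) = wc c n * (2*c*(2*n+3))"
proof -
  have p: "pochhammer (3::real) n > 0" by (rule pochhammer_pos) simp
  have "wc c (Suc n) = (pochhammer (3/2) n*((3 + real n)-3/2))/(pochhammer 3 n*(3 + real n))/((real n+1)*fact n)*((4*c)^n*(4*c))"
    unfolding wc_def pochhammer_Suc fact_Suc by (simp add: algebra_simps)
  then have "wc c (Suc n) * ((n+1)*(n+3)) = pochhammer (3/2) n / pochhammer 3 n / fact n * (4*c)^n*(2*c*(2*(3 + real n)-3))"
    using wc_aux[of "pochhammer 3 n" "fact n" "real n + 1" "3 + real n" "pochhammer (3/2) n" "(4*c)^n" c] p
    by (simp add: algebra_simps)
  then show ?thesis by (simp add: wc_def algebra_simps)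
qed

lemma wc0: "wc c 0 = 1" by (simp add: wc_def)

lemma W_ode:
  "fps_X * fps_deriv (fps_deriv (Abs_fps (wc c))) + 3 * fps_deriv (Abs_fps (wc c))
     - fps_const (4*c) * fps_X * fps_deriv (Abs_fps (wc c)) - fps_const (6*c) * Abs_fps (wc c) = 0"
proof (rule fps_ext)
  fix n
  show "fps_nth (fps_X * fps_deriv (fps_deriv (Abs_fps (wc c))) + 3 * fps_deriv (Abs_fps (wc c))
     - fps_const (4*c) * fps_X * fps_deriv (Abs_fps (wc c)) - fps_const (6*c) * Abs_fps (wc c)) n = fps_nth 0 n"
  proof (cases n)
    case 0
    have "3 * wc c 1 - 6*c*wc c 0 = 0" using wc_Suc[of c 0] by simp
    then show ?thesis using 0 by (simp add: numeral_fps_const)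
  next
    case (Suc m)
    have "(m+1)*(m+2) * wc c (m+2) + 3*(m+2) * wc c (m+2) - 4*c*(m+1)* wc c (m+1) - 6*c*wc c (m+1) = 0"
      using wc_Suc[of c "m+1"] by (simp add: algebra_simps eval_nat_numeral)
    then show ?thesis using Suc
      by (simp add: numeral_fps_const mult.assoc algebra_simps eval_nat_numeral del: fps_const_mult)
  qed
qed

lemma G_ode:
  fixes c :: real
  defines "G \<equiv> Abs_fps (wc c) * fps_exp ((c-1)^2)"
  shows "fps_X * fps_deriv (fps_deriv G) + 3 * fps_deriv G - fps_const (2*(1+c^2)) * fps_X * fps_deriv G
     + fps_const ((1-c^2)^2) * fps_X * G - fps_const (3*(1+c^2)) * G = 0"
proof -
  define C where "C = (fps_const c :: real fps)"
  define W where "W = Abs_fps (wc c)"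
  define E where "E = fps_exp ((c-1)^2 :: real)"
  have cy: "fps_const ((c-1)^2) = (C-1)^2"
    by (rule fps_ext) (simp add: C_def numeral_fps_const power2_eq_square algebra_simps)
  have c1: "fps_const (2*(1+c^2)) = 2*(1+C^2)"
    by (rule fps_ext) (simp add: C_def numeral_fps_const power2_eq_square algebra_simps)
  have c2: "fps_const ((1-c^2)^2) = (1-C^2)^2"
    by (rule fps_ext) (simp add: C_def numeral_fps_const power2_eq_square algebra_simps)
  have c3: "fps_const (3*(1+c^2)) = 3*(1+C^2)"
    by (rule fps_ext) (simp add: C_def numeral_fps_const power2_eq_square algebra_simps)
  have c4: "fps_const (4*c) = 4*C" and c6: "fps_const (6*c) = 6*C"
    by (rule fps_ext, simp add: C_def numeral_fps_const)+
  define K where "K = fps_const ((c-1)^2 :: real)"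
  have dE: "fps_deriv E = K * E" unfolding E_def K_def by simp
  have HW: "fps_X * fps_deriv (fps_deriv W) + 3 * fps_deriv W - 4*C * fps_X * fps_deriv W - 6*C * W = 0"
    using W_ode[of c] unfolding W_def c4 c6 .
  have dG: "fps_deriv G = fps_deriv W * E + W * (K * E)"
    unfolding G_def W_def[symmetric] E_def[symmetric] by (simp add: dE)
  have ddG: "fps_deriv (fps_deriv G) = fps_deriv (fps_deriv W) * E + 2 * fps_deriv W * (K * E)
      + W * (K * (K * E))"
    unfolding dG by (simp add: dE K_def algebra_simps)
  show ?thesis unfolding c1 c2 c3 ddG unfolding dG unfolding G_def W_def[symmetric] E_def[symmetric]
    K_def cy using HW by algebra
qed

definition gam :: "real \<Rightarrow> nat \<Rightarrow> real" where
  "gam c k = fps_nth (Abs_fps (wc c) * fps_exp ((c-1)^2)) k"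

lemma gam0: "gam c 0 = 1" by (simp add: gam_def wc0)

lemma ode_coeff:
  fixes F :: "real fps" and a b d :: real and k :: nat
  assumes E: "fps_X * fps_deriv (fps_deriv F) + 3 * fps_deriv F - fps_const a * fps_X * fps_deriv F
     + fps_const b * fps_X * F - fps_const d * F = 0"
  shows "real (k+2) * real (k+4) * fps_nth F (k+2) = (a*real (k+1) + d) * fps_nth F (k+1) - b * fps_nth F k"
    "3 * fps_nth F 1 = d * fps_nth F 0"
proof -
  have "fps_nth (fps_X * fps_deriv (fps_deriv F) + 3 * fps_deriv F - fps_const a * fps_X * fps_deriv F
     + fps_const b * fps_X * F - fps_const d * F) (Suc k) = 0" by (subst E) simp
  then show "real (k+2) * real (k+4) * fps_nth F (k+2) = (a*real (k+1) + d) * fps_nth F (k+1) - b * fps_nth F k"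
    by (simp add: numeral_fps_const mult.assoc eval_nat_numeral del: fps_const_mult) (simp add: algebra_simps)
  have "fps_nth (fps_X * fps_deriv (fps_deriv F) + 3 * fps_deriv F - fps_const a * fps_X * fps_deriv F
     + fps_const b * fps_X * F - fps_const d * F) 0 = 0" by (subst E) simp
  then show "3 * fps_nth F 1 = d * fps_nth F 0"
    by (simp add: numeral_fps_const mult.assoc del: fps_const_mult)
qed

lemma gam_rec:
  fixes k :: nat and c :: real
  shows "real (k+2) * real (k+4) * gam c (k+2) = (1+c^2)*real (2*k+5) * gam c (k+1) - (1-c^2)^2 * gam c k"
  "gam c 1 = (1+c^2) * gam c 0"
proof -
  note E = ode_coeff[OF G_ode[of c]]
  show "real (k+2) * real (k+4) * gam c (k+2) = (1+c^2)*real (2*k+5) * gam c (k+1) - (1-c^2)^2 * gam c k"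
    using E(1)[of k] unfolding gam_def by (simp add: algebra_simps)
  show "gam c 1 = (1+c^2) * gam c 0"
    using E(2) unfolding gam_def by (simp add: algebra_simps; linarith)
qed

lemma aa_gam:
  fixes c :: real
  assumes "c \<noteq> 0"
  shows "aa (c^2) (Suc k) = fact k * gam c k"
proof -
  have q: "c^2 \<noteq> 0" using assms by simp
  have "aa (c^2) (Suc k) = fact k * gam c k \<and> aa (c^2) (Suc (Suc k)) = fact (Suc k) * gam c (Suc k)"
  proof (induction k)
    case 0 show ?case using aa1[of "c^2"] aa2[of "c^2"] gam_rec(2)[of c] by (simp add: gam0 numeral_2_eq_2)
  next
    case (Suc k)
    have r1: "(k+4) * aa (c^2) (k+3) = (1+c^2)*(2*k+5) * aa (c^2) (k+2) - (1-c^2)^2*(k+1)*aa (c^2) (k+1)"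
      using aa_lin[OF q, of k] by simp
    have r2: "(k+2)*(k+4) * gam c (k+2) = (1+c^2)*(2*k+5) * gam c (k+1) - (1-c^2)^2 * gam c k"
      using gam_rec(1)[of k c] by (simp add: algebra_simps)
    have f: "fact (k+2) = (k+2) * ((k+1) * fact k)" "fact (k+1) = (k+1) * fact k"
      by (simp_all add: algebra_simps)
    have IH1: "aa (c^2) (k+1) = fact k * gam c k" and IH2: "aa (c^2) (k+2) = (k+1) * fact k * gam c (k+1)"
      using Suc.IH by (simp_all add: eval_nat_numeral algebra_simps)
    have "(k+4) * aa (c^2) (k+3) = (1+c^2)*(2*k+5) * ((k+1) * fact k * gam c (k+1)) - (1-c^2)^2*(k+1)*(fact k * gam c k)"
      using r1 unfolding IH1 IH2 .
    also have "\<dots> = (k+1) * fact k * ((1+c^2)*(2*k+5) * gam c (k+1) - (1-c^2)^2 * gam c k)"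
      by (simp add: algebra_simps)
    also have "\<dots> = (k+1) * fact k * ((k+2)*(k+4) * gam c (k+2))" unfolding r2 ..
    also have "\<dots> = (k+4) * (fact (k+2) * gam c (k+2))" unfolding f by (simp add: algebra_simps)
    finally have "(k+4) * aa (c^2) (k+3) = (k+4) * (fact (k+2) * gam c (k+2))" .
    then have "aa (c^2) (k+3) = fact (k+2) * gam c (k+2)" by simp
    then show ?case using Suc.IH by (simp add: eval_nat_numeral)
  qed
  then show ?thesis by simp
qed

lemma exp_sums: "(\<lambda>n. inverse (fact n) * (x::real)^n) sums exp x"
  using exp_converges[of x] by (simp add: divide_inverse mult.commute)

lemma poch_le: "0 < pochhammer (3/2::real) n \<and> pochhammer (3/2::real) n \<le> pochhammer 3 n"
proof (induction n)
  case 0 then show ?case by simp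
next
  case (Suc n)
  have "pochhammer (3/2::real) n * (3/2 + real n) \<le> pochhammer 3 n * (3 + real n)"
    using Suc by (intro mult_mono) auto
  moreover have "0 < pochhammer (3/2::real) n * (3/2 + real n)" using Suc by simp
  ultimately show ?case unfolding pochhammer_Suc by simp
qed

lemma aux_bound:
  fixes A B F z :: real
  assumes "0 < A" "A \<le> B" "0 < F"
  shows "\<bar>A / B / F * z\<bar> \<le> inverse F * \<bar>z\<bar>"
proof -
  have "A / B \<le> 1" "0 \<le> A / B" using assms by auto
  then have "\<bar>A / B\<bar> * (inverse F * \<bar>z\<bar>) \<le> 1 * (inverse F * \<bar>z\<bar>)"
    using assms by (intro mult_right_mono) auto
  then show ?thesis using assms by (simp add: abs_mult divide_inverse mult.assoc)
qed

lemma wc_bound: "\<bar>wc c n\<bar> \<le> inverse (fact n) * \<bar>4*c\<bar>^n"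
proof -
  have p: "0 < pochhammer (3/2::real) n" "pochhammer (3/2::real) n \<le> pochhammer 3 n" using poch_le by auto
  have "\<bar>wc c n\<bar> \<le> inverse (fact n) * \<bar>(4*c)^n\<bar>"
    unfolding wc_def by (rule aux_bound[OF p]) simp
  then show ?thesis by (simp only: power_abs)
qed

lemma wc_summable: "summable (\<lambda>n. norm (wc c n * x^n))"
proof (rule summable_comparison_test[OF _ summable_exp[of "\<bar>4*c*x\<bar>"]])
  show "\<exists>N. \<forall>n\<ge>N. norm (norm (wc c n * x ^ n)) \<le> inverse (fact n) * \<bar>4 * c * x\<bar> ^ n"
  proof (intro exI[of _ 0] allI impI)
    fix n :: nat
    have "\<bar>wc c n\<bar> * \<bar>x\<bar>^n \<le> inverse (fact n) * \<bar>4*c\<bar>^n * \<bar>x\<bar>^n"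
      using wc_bound[of c n] by (intro mult_right_mono) auto
    then show "norm (norm (wc c n * x ^ n)) \<le> inverse (fact n) * \<bar>4 * c * x\<bar> ^ n"
      by (simp add: abs_mult power_mult_distrib mult.assoc power_abs)
  qed
qed

lemma hyp_sums: "(\<lambda>n. wc c n * x^n) sums hyp1F1 (3/2) 3 (4*c*x)"
proof -
  have e: "(\<lambda>n. pochhammer (3/2) n / pochhammer 3 n * (4*c*x)^n / fact n) = (\<lambda>n. wc c n * x^n)"
    by (auto simp: wc_def power_mult_distrib)
  show ?thesis unfolding hyp1F1_def e
    using summable_norm_cancel[OF wc_summable] by (simp add: summable_sums)
qed

lemma gam_conv: "(\<Sum>i\<le>k. wc c i * x^i * (inverse (fact (k-i)) * ((c-1)^2*x)^(k-i))) = gam c k * x^k"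
proof -
  have "gam c k = (\<Sum>i=0..k. wc c i * (((c-1)^2)^(k-i) / fact (k-i)))"
    unfolding gam_def fps_mult_nth by simp
  then have "gam c k * x^k = (\<Sum>i\<le>k. wc c i * (((c-1)^2)^(k-i) / fact (k-i)) * x^k)"
    by (simp add: atLeast0AtMost sum_distrib_right)
  also have "\<dots> = (\<Sum>i\<le>k. wc c i * x^i * (inverse (fact (k-i)) * ((c-1)^2*x)^(k-i)))"
  proof (intro sum.cong refl)
    fix i assume "i \<in> {..k}"
    then have "x^k = x^i * x^(k-i)" by (simp add: power_add[symmetric])
    then show "wc c i * (((c-1)^2)^(k-i) / fact (k-i)) * x^k = wc c i * x^i * (inverse (fact (k-i)) * ((c-1)^2*x)^(k-i))"
      by (simp add: power_mult_distrib divide_inverse)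
  qed
  finally show ?thesis by simp
qed

lemma g_sums: "(\<lambda>k. gam c k * x^k) sums (hyp1F1 (3/2) 3 (4*c*x) * exp ((c-1)^2 * x))"
proof -
  let ?a = "\<lambda>i. wc c i * x^i"
  let ?b = "\<lambda>j. inverse (fact j) * ((c-1)^2*x)^j"
  have sa: "summable (\<lambda>k. norm (?a k))" by (rule wc_summable)
  have sb: "summable (\<lambda>k. norm (?b k))"
    using summable_exp[of "\<bar>(c-1)^2*x\<bar>"] by (simp add: abs_mult power_abs)
  have "(\<lambda>k. \<Sum>i\<le>k. ?a i * ?b (k - i)) sums (suminf ?a * suminf ?b)"
    by (rule Cauchy_product_sums[OF sa sb])
  moreover have "suminf ?a = hyp1F1 (3/2) 3 (4*c*x)" using hyp_sums[of c x] by (simp add: sums_iff)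
  moreover have "suminf ?b = exp ((c-1)^2 * x)" using exp_sums by (simp add: sums_iff)
  moreover have "(\<Sum>i\<le>k. ?a i * ?b (k - i)) = gam c k * x^k" for k by (rule gam_conv)
  ultimately show ?thesis by simp
qed

definition RR :: "real \<Rightarrow> real" where "RR q = 4 * (max 1 q)^2"

lemma RR_ge: "RR q \<ge> 1" unfolding RR_def
proof -
  have "1 \<le> (max 1 q)^2" by (simp add: one_le_power)
  then show "1 \<le> 4 * (max 1 q)^2" by linarith
qed

lemma aa_bound: assumes "q > 0" shows "\<bar>aa q m\<bar> \<le> RR q ^ m"
proof -
  have "\<bar>aa q m\<bar> \<le> (2 * max 1 q) ^ (2*m)"
    unfolding aa_def by (rule P_bound) (use assms in \<open>auto simp: w0_def\<close>)
  also have "\<dots> = RR q ^ m" unfolding RR_def power_mult by (simp add: power_mult_distrib)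
  finally show ?thesis .
qed

lemma aa_nonneg: assumes "q > 0" shows "aa q m \<ge> 0"
  unfolding aa_def by (rule P_nonneg) (use assms in \<open>auto simp: w0_def\<close>)

definition SS :: "real \<Rightarrow> nat \<Rightarrow> real \<Rightarrow> real" where
  "SS q k = (\<lambda>t. \<Sum>j. aa q (j+k) / fact j * t^j)"

lemma SS_term_bound:
  assumes "q > 0"
  shows "norm (aa q (j+k) / fact j * t^j) \<le> RR q ^ k * (inverse (fact j) * (RR q * \<bar>t\<bar>)^j)"
proof -
  have "\<bar>aa q (j+k)\<bar> \<le> RR q ^ j * RR q ^ k" using aa_bound[OF assms, of "j+k"] by (simp add: power_add)
  then have "\<bar>aa q (j+k)\<bar> * (inverse (fact j) * \<bar>t\<bar>^j) \<le> (RR q ^ j * RR q ^ k) * (inverse (fact j) * \<bar>t\<bar>^j)"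
    by (intro mult_right_mono) auto
  then show ?thesis by (simp add: abs_mult power_abs divide_inverse power_mult_distrib algebra_simps)
qed

lemma SS_summable:
  assumes "q > 0"
  shows "summable (\<lambda>j. norm (aa q (j+k) / fact j * t^j))"
  by (rule summable_comparison_test[OF _ summable_mult[OF summable_exp[of "RR q * \<bar>t\<bar>"], of "RR q ^ k"]])
     (use SS_term_bound[OF assms] in auto)

lemma SS_bound:
  assumes "q > 0"
  shows "\<bar>SS q k t\<bar> \<le> RR q ^ k * exp (RR q * \<bar>t\<bar>)"
proof -
  have s: "(\<lambda>j. RR q ^ k * (inverse (fact j) * (RR q * \<bar>t\<bar>)^j)) sums (RR q ^ k * exp (RR q * \<bar>t\<bar>))"
    by (rule sums_mult[OF exp_sums])
  have "norm (SS q k t) \<le> (\<Sum>j. RR q ^ k * (inverse (fact j) * (RR q * \<bar>t\<bar>)^j))"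
    unfolding SS_def by (rule norm_suminf_le) (use SS_term_bound[OF assms] s in \<open>auto simp: sums_iff\<close>)
  then show ?thesis using s by (simp add: sums_iff)
qed

lemma SS_deriv:
  assumes "q > 0"
  shows "(SS q k has_real_derivative SS q (Suc k) t) (at t)"
proof -
  have d: "diffs (\<lambda>j. aa q (j+k) / fact j) = (\<lambda>j. aa q (j + Suc k) / fact j)"
  proof (rule ext)
    fix n
    have "real (Suc n) \<noteq> 0" by simp
    then show "diffs (\<lambda>j. aa q (j+k) / fact j) n = aa q (n + Suc k) / fact n"
      unfolding diffs_def fact_Suc by (simp del: of_nat_Suc)
  qed
  have "((\<lambda>x. \<Sum>n. aa q (n+k) / fact n * x^n) has_field_derivative
        (\<Sum>n. diffs (\<lambda>j. aa q (j+k) / fact j) n * t^n)) (at t)"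
    by (rule termdiffs_strong_converges_everywhere)
       (rule summable_norm_cancel[OF SS_summable[OF assms]])
  then show ?thesis unfolding d SS_def .
qed

lemma SS_zero: "SS q k 0 = aa q k"
  unfolding SS_def using powser_zero[of "\<lambda>j. aa q (j+k) / fact j"] by simp

lemma SS1_eq:
  assumes "q > 0"
  shows "SS q 1 x = hyp1F1 (3/2) 3 (4 * sqrt q * x) * exp ((sqrt q - 1)^2 * x)"
proof -
  define c where "c = sqrt q"
  have c: "c \<noteq> 0" "c^2 = q" using assms by (auto simp: c_def)
  have "(\<lambda>j. aa q (j+1) / fact j * x^j) = (\<lambda>j. gam c j * x^j)"
    using aa_gam[OF c(1)] c(2) by auto
  then show ?thesis using g_sums[of c x] unfolding SS_def c_def[symmetric] by (simp add: sums_iff)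
qed

lemma mono_from_deriv:
  fixes G G' :: "real \<Rightarrow> real"
  assumes d: "\<And>s. 0 \<le> s \<Longrightarrow> s \<le> T \<Longrightarrow> (G has_real_derivative G' s) (at s within {0..})"
    and nn: "\<And>s. 0 \<le> s \<Longrightarrow> s \<le> T \<Longrightarrow> G' s \<ge> 0"
    and t: "0 \<le> t" "t \<le> T"
  shows "G 0 \<le> G t"
proof (rule DERIV_nonneg_imp_increasing_open[OF t(1)])
  fix x assume x: "0 < x" "x < t"
  have "interior {0::real..} = {0<..}" by (rule interior_real_atLeast)
  then have "at x within {0::real..} = at x" using x by (intro at_within_interior) auto
  then have "(G has_real_derivative G' x) (at x)" using d[of x] x t by simp
  then show "\<exists>y. (G has_real_derivative y) (at x) \<and> 0 \<le> y" using nn[of x] x t by auto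
next
  show "continuous_on {0..t} G"
    by (rule DERIV_continuous_on[of _ _ G']) (rule DERIV_subset[OF d]; use t in auto)
qed

lemma bound_step:
  fixes F F' :: "real \<Rightarrow> real"
  assumes d: "\<And>s. 0 \<le> s \<Longrightarrow> s \<le> T \<Longrightarrow> (F has_real_derivative F' s) (at s within {0..})"
    and F0: "F 0 = 0"
    and b: "\<And>s. 0 \<le> s \<Longrightarrow> s \<le> T \<Longrightarrow> \<bar>F' s\<bar> \<le> M * s^n / fact n"
    and t: "0 \<le> t" "t \<le> T"
  shows "\<bar>F t\<bar> \<le> M * t^(Suc n) / fact (Suc n)"
proof -
  define \<phi> where "\<phi> = (\<lambda>s::real. M * s^(Suc n) / fact (Suc n))"
  have dphi: "(\<phi> has_real_derivative M * s^n / fact n) (at s within {0..})" for s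
  proof -
    have "(\<phi> has_real_derivative M * (real (Suc n) * s^(Suc n - Suc 0)) / fact (Suc n)) (at s within {0..})"
      unfolding \<phi>_def by (intro DERIV_cdivide DERIV_cmult DERIV_pow)
    moreover have "M * (real (Suc n) * s^n) / fact (Suc n) = M * s^n / fact n"
      by (simp add: fact_Suc del: of_nat_Suc)
    ultimately show ?thesis by (simp del: of_nat_Suc)
  qed
  have "(\<phi> 0 - F 0) \<le> (\<phi> t - F t)"
  proof (rule mono_from_deriv[of T "\<lambda>s. \<phi> s - F s" "\<lambda>s. M * s^n / fact n - F' s" t])
    fix s :: real assume s: "0 \<le> s" "s \<le> T"
    show "((\<lambda>s. \<phi> s - F s) has_real_derivative M * s^n / fact n - F' s) (at s within {0..})"
      by (intro DERIV_diff dphi d s)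
    show "0 \<le> M * s^n / fact n - F' s" using b[OF s] by (simp add: abs_le_iff)
  qed (use t in auto)
  moreover have "(\<phi> 0 + F 0) \<le> (\<phi> t + F t)"
  proof (rule mono_from_deriv[of T "\<lambda>s. \<phi> s + F s" "\<lambda>s. M * s^n / fact n + F' s" t])
    fix s :: real assume s: "0 \<le> s" "s \<le> T"
    show "((\<lambda>s. \<phi> s + F s) has_real_derivative M * s^n / fact n + F' s) (at s within {0..})"
      by (intro DERIV_add dphi d s)
    show "0 \<le> M * s^n / fact n + F' s" using b[OF s] by (simp add: abs_le_iff)
  qed (use t in auto)
  ultimately show ?thesis using F0 unfolding \<phi>_def by (simp add: abs_le_iff)
qed

lemma zero_family:
  fixes F F' :: "nat \<Rightarrow> real \<Rightarrow> real"
  assumes R: "R \<ge> 0" and C: "C \<ge> 0"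
    and d: "\<And>k s. 0 \<le> s \<Longrightarrow> s \<le> T \<Longrightarrow> (F k has_real_derivative F' k s) (at s within {0..})"
    and F0: "\<And>k. F k 0 = 0"
    and b: "\<And>k s. 0 \<le> s \<Longrightarrow> s \<le> T \<Longrightarrow> \<bar>F k s\<bar> \<le> C * R^k"
    and db: "\<And>k s. 0 \<le> s \<Longrightarrow> s \<le> T \<Longrightarrow> \<bar>F' k s\<bar> \<le> \<bar>F (Suc k) s\<bar> + R^k * \<bar>F 1 s\<bar>"
    and t: "0 \<le> t" "t \<le> T"
  shows "F k t = 0"
proof -
  have claim: "\<forall>k s. 0 \<le> s \<longrightarrow> s \<le> T \<longrightarrow> \<bar>F k s\<bar> \<le> (C * R^k * (2*R)^n) * s^n / fact n" for n
  proof (induction n)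
    case 0 then show ?case using b by simp
  next
    case (Suc n)
    show ?case
    proof (intro allI impI)
      fix k s assume s: "0 \<le> (s::real)" "s \<le> T"
      show "\<bar>F k s\<bar> \<le> (C * R^k * (2*R)^Suc n) * s^Suc n / fact (Suc n)"
      proof (rule bound_step[OF d F0 _ s])
        fix x assume x: "0 \<le> x" "x \<le> T"
        have "\<bar>F' k x\<bar> \<le> \<bar>F (Suc k) x\<bar> + R^k * \<bar>F 1 x\<bar>" using db x by blast
        also have "\<dots> \<le> (C * R^Suc k * (2*R)^n) * x^n / fact n + R^k * ((C * R^1 * (2*R)^n) * x^n / fact n)"
          using Suc.IH[rule_format, of x "Suc k"] Suc.IH[rule_format, of x 1] x R
          by (intro add_mono mult_left_mono) auto
        also have "\<dots> = (C * R^k * (2*R)^Suc n) * x^n / fact n" by (simp add: algebra_simps)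
        finally show "\<bar>F' k x\<bar> \<le> (C * R^k * (2*R)^Suc n) * x^n / fact n" .
      qed
    qed
  qed
  have lim: "(\<lambda>n. C * R^k * (inverse (fact n) * (2*R*t)^n)) \<longlonglongrightarrow> 0"
    using tendsto_mult_left[OF summable_LIMSEQ_zero[OF summable_exp[of "2*R*t"]], of "C * R^k"] by simp
  have "\<bar>F k t\<bar> \<le> 0"
  proof (rule LIMSEQ_le_const[OF lim], intro exI allI impI)
    fix n show "\<bar>F k t\<bar> \<le> C * R^k * (inverse (fact n) * (2*R*t)^n)"
      using claim[of n, rule_format, OF t, of k] by (simp add: power_mult_distrib divide_inverse mult_ac)
  qed
  then show ?thesis by simp
qed

lemma f1_eq:
  assumes q: "q > 0"
  shows "1 + (LBINT x=0..ereal s. hyp1F1 (3/2) 3 (4 * sqrt q * x) * exp ((sqrt q - 1)^2 * x)) = SS q 0 s"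
proof -
  have e: "(\<lambda>x. hyp1F1 (3/2) 3 (4 * sqrt q * x) * exp ((sqrt q - 1)^2 * x)) = SS q 1"
    using SS1_eq[OF q] by auto
  have "(LBINT x=ereal 0..ereal s. SS q 1 x) = SS q 0 s - SS q 0 0"
  proof (rule interval_integral_FTC_finite)
    show "continuous_on {min 0 s..max 0 s} (SS q 1)"
      by (rule DERIV_continuous_on[of _ _ "SS q 2"])
         (rule has_field_derivative_at_within, use SS_deriv[OF q, of 1] in \<open>simp add: numeral_2_eq_2\<close>)
    fix x show "(SS q 0 has_vector_derivative SS q 1 x) (at x within {min 0 s..max 0 s})"
      unfolding has_real_derivative_iff_has_vector_derivative[symmetric]
      by (rule has_field_derivative_at_within) (use SS_deriv[OF q, of 0] in simp)
  qed
  moreover have "SS q 0 0 = 1" by (simp add: SS_zero aa0)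
  ultimately show ?thesis unfolding e zero_ereal_def by simp
qed

lemma SS0_pos:
  assumes q: "q > 0" and t: "t \<ge> 0"
  shows "SS q 0 t \<ge> 1"
proof -
  have "sum (\<lambda>j. aa q (j+0) / fact j * t^j) {0} \<le> (\<Sum>j. aa q (j+0) / fact j * t^j)"
  proof (rule sum_le_suminf)
    show "summable (\<lambda>j. aa q (j+0) / fact j * t^j)"
      by (rule summable_norm_cancel[OF SS_summable[OF q, of 0 t]])
  qed (use aa_nonneg[OF q] t in auto)
  then show ?thesis by (simp add: SS_def aa0)
qed

theorem proposition11:
  fixes q :: real and u :: "int \<Rightarrow> real \<Rightarrow> real"
  assumes q_pos: "q > 0"
    and lattice: "\<And>j t. t \<ge> 0 \<Longrightarrow>
        (u j has_real_derivative (u j t * (u (j + 1) t - u (j - 1) t))) (at t within {0..})"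
    and init: "\<And>j. u j 0 = (if j \<le> 0 then 0 else if odd j then 1 else q)"
    and bounded: "\<exists>B. \<forall>j t. t \<ge> 0 \<longrightarrow> \<bar>u j t\<bar> \<le> B"
  shows "\<forall>t \<ge> 0.
    (let c = sqrt q;
         f1 = (\<lambda>s::real. 1 + (LBINT x=0..ereal s. hyp1F1 (3/2) 3 (4 * c * x) * exp ((c - 1)^2 * x)))
     in u 1 t = deriv f1 t / f1 t)"
proof (intro allI impI)
  fix t :: real assume t: "t \<ge> 0"
  obtain B where B: "\<And>j t. t \<ge> 0 \<Longrightarrow> \<bar>u j t\<bar> \<le> B" using bounded by blast
  have B0: "B \<ge> 0" using B[of 0 0] by simp
  have u0: "u 0 s = 0" if s: "s \<ge> 0" for s
  proof -
    have "(2*B)^0 * u 0 s = 0"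
    proof (rule zero_family[where F = "\<lambda>k s. (2*B)^k * u 0 s"
          and F' = "\<lambda>k s. (2*B)^k * (u 0 s * (u 1 s - u (-1) s))" and R = "2*B" and C = B and T = s])
      fix k :: nat and x :: real assume x: "0 \<le> x" "x \<le> s"
      show "((\<lambda>s. (2*B)^k * u 0 s) has_real_derivative (2*B)^k * (u 0 x * (u 1 x - u (-1) x))) (at x within {0..})"
        using lattice[OF x(1), of 0] by (intro DERIV_cmult) simp
      have "\<bar>u 0 x\<bar> * (2*B)^k \<le> B * (2*B)^k" using B[OF x(1), of 0] B0 by (intro mult_right_mono) auto
      then show "\<bar>(2*B)^k * u 0 x\<bar> \<le> B * (2*B)^k" using B0 by (simp add: abs_mult mult.commute)
      have "\<bar>u 1 x - u (-1) x\<bar> \<le> 2*B" using B[OF x(1), of 1] B[OF x(1), of "-1"] by linarith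
      then have "\<bar>u 0 x\<bar> * \<bar>u 1 x - u (-1) x\<bar> \<le> \<bar>u 0 x\<bar> * (2*B)" by (intro mult_left_mono) auto
      then have "\<bar>(2*B)^k * (u 0 x * (u 1 x - u (-1) x))\<bar> \<le> (2*B)^k * (\<bar>u 0 x\<bar> * (2*B))"
        using B0 by (simp add: abs_mult mult_left_mono)
      also have "\<dots> = \<bar>(2*B)^Suc k * u 0 x\<bar>" using B0 by (simp add: abs_mult)
      finally show "\<bar>(2*B)^k * (u 0 x * (u 1 x - u (-1) x))\<bar> \<le> \<bar>(2*B)^Suc k * u 0 x\<bar> + (2*B)^k * \<bar>(2*B)^1 * u 0 x\<bar>"
        using B0 by (smt (verit) mult_nonneg_nonneg zero_le_power abs_ge_zero)
    qed (use B0 init s in auto)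
    then show ?thesis by simp
  qed
  show "let c = sqrt q;
         f1 = (\<lambda>s::real. 1 + (LBINT x=0..ereal s. hyp1F1 (3/2) 3 (4 * c * x) * exp ((c - 1)^2 * x)))
     in u 1 t = deriv f1 t / f1 t"
  proof -
    define W where "W = (\<lambda>s h. u (int h) s)"
    define m where "m = (\<lambda>k s. P (W s) (2*k) 0)"
    define K where "K = max 1 B"
    define R where "R = max ((2*K)^2) (RR q)"
    define E where "E = exp (RR q * t)"
    have K1: "K \<ge> 1" by (simp add: K_def)
    have R1: "R \<ge> 1" using RR_ge[of q] by (simp add: R_def)
    have RRR: "RR q \<le> R" by (simp add: R_def)
    have E0: "E \<ge> 0" by (simp add: E_def)
    have mb: "\<bar>m k s\<bar> \<le> R^k" if s: "s \<ge> 0" for k s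
    proof -
      have "\<bar>m k s\<bar> \<le> (2*K)^(2*k)"
        unfolding m_def
      proof (rule P_bound[OF _ K1])
        fix h show "\<bar>W s h\<bar> \<le> K" using B[OF s, of "int h"] by (simp add: W_def K_def le_max_iff_disj)
      qed
      also have "\<dots> = ((2*K)^2)^k" by (simp add: power_mult)
      also have "\<dots> \<le> R^k" by (rule power_mono) (auto simp: R_def)
      finally show ?thesis .
    qed
    have SSb: "\<bar>SS q k s\<bar> \<le> R^k * E" if s: "0 \<le> s" "s \<le> t" for k s
    proof -
      have "\<bar>SS q k s\<bar> \<le> RR q ^ k * exp (RR q * \<bar>s\<bar>)" by (rule SS_bound[OF q_pos])
      also have "\<dots> \<le> R^k * E" unfolding E_def
        using RR_ge[of q] s RRR by (intro mult_mono power_mono) (auto intro!: mult_left_mono)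
      finally show ?thesis .
    qed
    have md: "((\<lambda>s. m k s) has_real_derivative u 1 s * u 2 s * P (W s) (2*k) 2) (at s within {0..})"
      if s: "s \<ge> 0" for k s
      using P_deriv[OF lattice u0 s, of "2*k" 0] unfolding m_def W_def by (simp add: numeral_2_eq_2)
    have m_rec: "m (Suc k) s = u 1 s * (m k s + u 2 s * P (W s) (2*k) 2)" for k s
    proof -
      have "m (Suc k) s = P (W s) (Suc (Suc (2*k))) 0" by (simp add: m_def)
      also have "\<dots> = u 1 s * (m k s + u 2 s * P (W s) (2*k) 2)"
        unfolding P_two by (simp add: m_def W_def)
      finally show ?thesis .
    qed
    have m1: "m 1 s = u 1 s" for s using m_rec[of 0 s] by (simp add: m_def)
    have m0: "m k 0 = aa q k" for k
      unfolding m_def aa_def by (rule P_cong) (auto simp: W_def init w0_def)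
    define F where "F = (\<lambda>k s. m k s * SS q 0 s - SS q k s)"
    define F' where "F' = (\<lambda>k s. m k s * SS q 1 s + u 1 s * u 2 s * P (W s) (2*k) 2 * SS q 0 s - SS q (Suc k) s)"
    have "F 1 t = 0"
    proof (rule zero_family[where F = F and F' = F' and R = R and C = "2*E" and T = t])
      fix k :: nat and s :: real assume s: "0 \<le> s" "s \<le> t"
      have d0: "(SS q 0 has_real_derivative SS q 1 s) (at s within {0..})"
        by (rule has_field_derivative_at_within) (use SS_deriv[OF q_pos, of 0] in simp)
      have dk: "(SS q k has_real_derivative SS q (Suc k) s) (at s within {0..})"
        by (rule has_field_derivative_at_within[OF SS_deriv[OF q_pos]])
      show "(F k has_real_derivative F' k s) (at s within {0..})"
        unfolding F_def F'_def by (intro DERIV_diff DERIV_mult' md d0 dk s)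
      have "\<bar>F k s\<bar> \<le> \<bar>m k s\<bar> * \<bar>SS q 0 s\<bar> + \<bar>SS q k s\<bar>"
        unfolding F_def by (metis abs_mult abs_triangle_ineq4 order_trans abs_ge_zero add_le_cancel_left order_refl)
      also have "\<dots> \<le> R^k * (R^0 * E) + R^k * E"
        using mb[OF s(1), of k] SSb[OF s, of 0] SSb[OF s, of k]
        by (intro add_mono mult_mono) auto
      also have "\<dots> = 2 * E * R^k" by simp
      finally show "\<bar>F k s\<bar> \<le> 2 * E * R^k" .
      have "F' k s = F (Suc k) s - m k s * F 1 s"
        unfolding F_def F'_def m_rec m1 by (simp add: algebra_simps)
      then have "\<bar>F' k s\<bar> \<le> \<bar>F (Suc k) s\<bar> + \<bar>m k s\<bar> * \<bar>F 1 s\<bar>"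
        by (simp add: abs_mult[symmetric])
      also have "\<dots> \<le> \<bar>F (Suc k) s\<bar> + R^k * \<bar>F 1 s\<bar>"
        using mb[OF s(1), of k] by (intro add_left_mono mult_right_mono) auto
      finally show "\<bar>F' k s\<bar> \<le> \<bar>F (Suc k) s\<bar> + R^k * \<bar>F 1 s\<bar>" .
    next
      fix k show "F k 0 = 0" by (simp add: F_def m0 SS_zero aa0)
    qed (use R1 E0 t in auto)
    then have key: "u 1 t * SS q 0 t = SS q 1 t" using m1[of t] by (simp add: F_def)
    have f1: "(\<lambda>s::real. 1 + (LBINT x=0..ereal s. hyp1F1 (3/2) 3 (4 * sqrt q * x) * exp ((sqrt q - 1)^2 * x)))
      = SS q 0" using f1_eq[OF q_pos] by auto
    have dd: "deriv (SS q 0) t = SS q 1 t"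
      by (rule DERIV_imp_deriv) (use SS_deriv[OF q_pos, of 0] in simp)
    have pos: "SS q 0 t \<ge> 1" by (rule SS0_pos[OF q_pos t])
    show ?thesis unfolding Let_def f1 dd using key pos f1_eq[OF q_pos, of t] by (simp add: field_simps)
  qed
qed

end
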